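(* Let $r,t\ge 2$, let $Wd(r,t)$ be the windmill graph, $n=t(r-1)+1$ its order, and $k$ an integer with $2\le k\le n$. Then $$SW_k(Wd(r,t))=(n-1)\binom{n-1}{k-1}-t\binom{r-1}{k}.$$
   Context: The windmill graph $Wd(r,t)$ is obtained by taking $t$ copies of the complete graph $K_r$ and identifying one vertex from each copy into a single shared vertex. For $S\subseteq V(G)$, the Steiner distance $d(S)$ is the minimum number of edges of a connected subgraph whose vertex set contains $S$, and $SW_k(G)=\sum_{|S|=k} d(S)$. Convention $\binom{m}{l}=0$ for $m<l$. *)

theory Defs
  imports Main
begin

text \<open>Simple graphs: vertex set V and edge set E, each edge a 2-element set of vertices.\<close>

definition edge_rel :: "'a set set \<Rightarrow> ('a \<times> 'a) set" where
  "edge_rel F = {(u, v). {u, v} \<in> F}"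

definition connected_sub :: "'a set \<Rightarrow> 'a set set \<Rightarrow> bool" where
  "connected_sub W F \<longleftrightarrow> (\<forall>u\<in>W. \<forall>v\<in>W. (u, v) \<in> (edge_rel F)\<^sup>*)"

definition steiner_dist :: "'a set \<Rightarrow> 'a set set \<Rightarrow> 'a set \<Rightarrow> nat" where
  "steiner_dist V E S = (LEAST m. \<exists>W F. S \<subseteq> W \<and> W \<subseteq> V \<and> F \<subseteq> E \<and>
      (\<forall>e\<in>F. e \<subseteq> W) \<and> connected_sub W F \<and> card F = m)"

definition steiner_wiener :: "'a set \<Rightarrow> 'a set set \<Rightarrow> nat \<Rightarrow> nat" where
  "steiner_wiener V E k = (\<Sum>S\<in>{S. S \<subseteq> V \<and> card S = k}. steiner_dist V E S)"

text \<open>Windmill graph Wd(r,t): shared centre None; copy i (i < t) contributes the r-1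
  non-central vertices Some (i, j), j < r - 1; each copy together with the centre is a K_r.\<close>
definition wd_verts :: "nat \<Rightarrow> nat \<Rightarrow> (nat \<times> nat) option set" where
  "wd_verts r t = insert None {Some (i, j) | i j. i < t \<and> j < r - 1}"

definition wd_edges :: "nat \<Rightarrow> nat \<Rightarrow> (nat \<times> nat) option set set" where
  "wd_edges r t =
     {{None, Some (i, j)} | i j. i < t \<and> j < r - 1} \<union>
     {{Some (i, j), Some (i, j')} | i j j'. i < t \<and> j < r - 1 \<and> j' < r - 1 \<and> j \<noteq> j'}"

end

theory Submission
  imports Defs
begin


lemma conn_lower:
  assumes fin: "finite F" and conn: "connected_sub W F" and c: "c \<in> W"
  shows "card W - 1 \<le> card F"
proof -
  define R where "R = edge_rel F"
  have reach: "\<forall>v\<in>W. \<exists>m. (v, c) \<in> R ^^ m"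
    using conn c unfolding connected_sub_def R_def by (meson rtrancl_imp_relpow)
  define dd where "dd v = (LEAST m. (v, c) \<in> R ^^ m)" for v
  have ddI: "(v, c) \<in> R ^^ dd v" if "v \<in> W" for v
    using reach that unfolding dd_def by (meson LeastI_ex)
  have ddle: "dd v \<le> m" if "(v, c) \<in> R ^^ m" for v m
    using that unfolding dd_def by (meson Least_le)
  have ex: "\<exists>u. {v, u} \<in> F \<and> dd u < dd v" if "v \<in> W - {c}" for v
  proof -
    have p: "(v, c) \<in> R ^^ dd v" using ddI that by blast
    have "dd v \<noteq> 0" using p that by (metis DiffE insertI1 relpow_0_E)
    then obtain m where m: "dd v = Suc m" by (cases "dd v") auto
    with p obtain u where "(v, u) \<in> R" "(u, c) \<in> R ^^ m"
      by (metis relpow_Suc_D2)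
    then show ?thesis using ddle[of u m] m unfolding R_def edge_rel_def by auto
  qed
  define f where "f v = {v, SOME u. {v, u} \<in> F \<and> dd u < dd v}" for v
  have fp: "f v \<in> F \<and> (\<exists>u. f v = {v,u} \<and> dd u < dd v)" if "v \<in> W - {c}" for v
    using someI_ex[OF ex[OF that]] unfolding f_def by blast
  have inj: "inj_on f (W - {c})"
  proof (rule inj_onI)
    fix x y assume x: "x \<in> W - {c}" and y: "y \<in> W - {c}" and e: "f x = f y"
    obtain u where u: "f x = {x,u}" "dd u < dd x" using fp x by blast
    obtain w where w: "f y = {y,w}" "dd w < dd y" using fp y by blast
    show "x = y"
    proof (rule ccontr)
      assume "x \<noteq> y"
      then have "x = w" "y = u" using e u w by (auto simp: doubleton_eq_iff)
      then show False using u w by simp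
    qed
  qed
  have "card (W - {c}) \<le> card F"
    by (rule card_inj_on_le[OF inj _ fin]) (use fp in blast)
  then show ?thesis using c by (cases "finite W") (auto simp: card_Diff_singleton)
qed

lemma star_conn:
  assumes "c \<in> W"
  shows "connected_sub W ((\<lambda>x. {c, x}) ` (W - {c}))"
proof -
  let ?F = "(\<lambda>x. {c, x}) ` (W - {c})"
  have a: "(x, c) \<in> (edge_rel ?F)\<^sup>*" "(c, x) \<in> (edge_rel ?F)\<^sup>*" if "x \<in> W" for x
  proof -
    have "x = c \<or> ((x, c) \<in> edge_rel ?F \<and> (c, x) \<in> edge_rel ?F)"
      using that unfolding edge_rel_def by (auto simp: insert_commute)
    then show "(x, c) \<in> (edge_rel ?F)\<^sup>*" "(c, x) \<in> (edge_rel ?F)\<^sup>*" by auto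
  qed
  show ?thesis unfolding connected_sub_def using a by (meson rtrancl_trans)
qed

lemma steiner_eq:
  assumes finE: "finite E" and finV: "finite V"
    and SW: "S \<subseteq> W" "W \<subseteq> V" and c: "c \<in> W"
    and edges: "\<And>x. x \<in> W - {c} \<Longrightarrow> {c, x} \<in> E"
    and lower: "\<And>W' F. S \<subseteq> W' \<Longrightarrow> W' \<subseteq> V \<Longrightarrow> F \<subseteq> E \<Longrightarrow> (\<forall>e\<in>F. e \<subseteq> W') \<Longrightarrow>
       connected_sub W' F \<Longrightarrow> card W \<le> card W'"
  shows "steiner_dist V E S = card W - 1"
  unfolding steiner_dist_def
proof (rule Least_equality)
  let ?F = "(\<lambda>x. {c, x}) ` (W - {c})"
  have "inj_on (\<lambda>x. {c, x}) (W - {c})" by (rule inj_onI) (auto simp: doubleton_eq_iff)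
  then have "card ?F = card (W - {c})" by (rule card_image)
  also have "\<dots> = card W - 1" using c by simp
  finally have cF: "card ?F = card W - 1" .
  show "\<exists>W' F. S \<subseteq> W' \<and> W' \<subseteq> V \<and> F \<subseteq> E \<and> (\<forall>e\<in>F. e \<subseteq> W') \<and> connected_sub W' F \<and> card F = card W - 1"
    apply (rule exI[of _ W], rule exI[of _ ?F])
    using SW c edges star_conn[OF c] cF by auto
next
  fix m assume "\<exists>W' F. S \<subseteq> W' \<and> W' \<subseteq> V \<and> F \<subseteq> E \<and> (\<forall>e\<in>F. e \<subseteq> W') \<and> connected_sub W' F \<and> card F = m"
  then obtain W' F where h: "S \<subseteq> W'" "W' \<subseteq> V" "F \<subseteq> E" "\<forall>e\<in>F. e \<subseteq> W'" "connected_sub W' F" "card F = m" by blast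
  have "card W \<le> card W'" using lower h by blast
  moreover have "W' \<noteq> {}" using c SW lower h
    by (metis card_0_eq empty_iff finV finite_subset le_0_eq)
  then obtain c' where "c' \<in> W'" by blast
  then have "card W' - 1 \<le> card F" using conn_lower h finE by (meson finite_subset)
  ultimately show "card W - 1 \<le> m" using h by linarith
qed


lemma binom_id:
  assumes "1 \<le> k" "k \<le> N + 1"
  shows "(k - 1) * (Suc N choose k) + (N choose k) = N * (N choose (k - 1))"
proof -
  obtain k' where k: "k = Suc k'" using assms by (cases k) auto
  have kN: "k' \<le> N" using assms k by simp
  have h: "Suc k' * (N choose Suc k') = (N - k') * (N choose k')"
  proof -
    have "Suc k' * (N choose Suc k') = N * ((N - 1) choose k')"
      using times_binomial_minus1_eq[of "Suc k'" N] by simp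
    also have "(N - k') * (N choose k') = N * ((N - 1) choose k')"
      by (metis binomial_absorb_comp times_binomial_minus1_eq zero_less_Suc diff_Suc_1 mult.commute) 
    finally show ?thesis by simp
  qed
  have "k' * (Suc N choose Suc k') + (N choose Suc k') = k' * (N choose k') + Suc k' * (N choose Suc k')"
    by (simp add: algebra_simps)
  also have "\<dots> = k' * (N choose k') + (N - k') * (N choose k')" by (simp only: h)
  also have "\<dots> = (k' + (N - k')) * (N choose k')" by (simp only: add_mult_distrib)
  also have "\<dots> = N * (N choose k')" using kN by simp
  finally show ?thesis using k by simp
qed


definition blade :: "nat \<Rightarrow> nat \<Rightarrow> (nat \<times> nat) option set" where
  "blade r i = (\<lambda>j. Some (i, j)) ` {..<r - 1}"

lemma wd_verts_eq: "wd_verts r t = insert None (Some ` ({..<t} \<times> {..<r - 1}))"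
  unfolding wd_verts_def by auto

lemma finite_V: "finite (wd_verts r t)" unfolding wd_verts_eq by simp

lemma E_sub: "wd_edges r t \<subseteq> Pow (wd_verts r t)"
  unfolding wd_edges_def wd_verts_def by auto

lemma finite_E: "finite (wd_edges r t)"
  using finite_subset[OF E_sub] finite_V by blast

lemma card_rest: "card (wd_verts r t - {None}) = t * (r - 1)"
proof -
  have "wd_verts r t - {None} = Some ` ({..<t} \<times> {..<r - 1})" unfolding wd_verts_eq by auto
  then show ?thesis by (simp add: card_image card_cartesian_product)
qed

lemma card_V: "card (wd_verts r t) = t * (r - 1) + 1"
  unfolding wd_verts_eq by (simp add: card_image card_cartesian_product)

lemma card_blade: "card (blade r i) = r - 1"
  unfolding blade_def by (simp add: card_image inj_on_def)

lemma reach_blade: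
  assumes "(x, y) \<in> (edge_rel F)\<^sup>*" "F \<subseteq> wd_edges r t" "\<forall>e\<in>F. e \<subseteq> W" "None \<notin> W"
    "x = Some (i, j)"
  shows "\<exists>j'. y = Some (i, j')"
  using assms(1,5)
proof (induction arbitrary: j rule: rtrancl_induct)
  case base then show ?case by simp
next
  case (step y z)
  obtain j' where y: "y = Some (i, j')" using step by blast
  have e: "{y, z} \<in> F" using step(2) unfolding edge_rel_def by simp
  then have "{y, z} \<subseteq> W" using assms(3) by blast
  then have zN: "z \<noteq> None" "y \<noteq> None" using assms(4) by (metis insert_subset)+
  obtain a b where z: "z = Some (a, b)" using zN(1) by (cases z) force+
  have "{y, z} \<in> wd_edges r t" using e assms(2) by blast
  then show ?case using y z unfolding wd_edges_def by (auto simp: doubleton_eq_iff)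
qed

lemma d_val:
  assumes r: "r \<ge> 2" and S: "S \<subseteq> wd_verts r t" "card S = k" "2 \<le> k"
  shows "steiner_dist (wd_verts r t) (wd_edges r t) S =
     k - 1 + (if None \<notin> S \<and> (\<forall>i<t. \<not> S \<subseteq> blade r i) then 1 else 0)"
proof -
  let ?V = "wd_verts r t" and ?E = "wd_edges r t"
  have finS: "finite S" using S finite_V finite_subset by blast
  have lowS: "card S \<le> card W'" if "S \<subseteq> W'" "W' \<subseteq> ?V" for W'
    using that finite_V by (meson card_mono finite_subset)
  show ?thesis
  proof (cases "None \<in> S")
    case True
    have "steiner_dist ?V ?E S = card S - 1"
    proof (rule steiner_eq[OF finite_E finite_V _ S(1) True])
      fix x assume "x \<in> S - {None}"
      then obtain i j where "x = Some (i, j)" "i < t" "j < r - 1" using S unfolding wd_verts_def by auto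
      then show "{None, x} \<in> ?E" unfolding wd_edges_def by auto
    qed (use lowS in auto)
    then show ?thesis using True S by simp
  next
    case False
    show ?thesis
    proof (cases "\<exists>i<t. S \<subseteq> blade r i")
      case True
      then obtain i where i: "i < t" "S \<subseteq> blade r i" by blast
      have "S \<noteq> {}" using S by auto
      then obtain c where c: "c \<in> S" by blast
      have "steiner_dist ?V ?E S = card S - 1"
      proof (rule steiner_eq[OF finite_E finite_V _ S(1) c])
        fix x assume x: "x \<in> S - {c}"
        then obtain j where "x = Some (i, j)" "j < r - 1" using i unfolding blade_def by auto
        moreover obtain j0 where "c = Some (i, j0)" "j0 < r - 1" using c i unfolding blade_def by auto
        ultimately have ex: "x = Some (i, j)" "c = Some (i, j0)" "j < r - 1" "j0 < r - 1" "j \<noteq> j0" using x by auto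
        have "{Some (i, j0), Some (i, j)} \<in> ?E" unfolding wd_edges_def
          by (rule UnI2, rule CollectI, intro exI[of _ i] exI[of _ j0] exI[of _ j]) (use ex i in auto)
        then show "{c, x} \<in> ?E" using ex by simp
      qed (use lowS in auto)
      moreover have c: "(None \<notin> S \<and> (\<forall>i<t. \<not> S \<subseteq> blade r i)) = False" using True by blast
      ultimately show ?thesis using S by (simp only: c if_False)
    next
      case nb: False
      have W: "insert None S \<subseteq> ?V" using S unfolding wd_verts_def by auto
      have "steiner_dist ?V ?E S = card (insert None S) - 1"
      proof (rule steiner_eq[OF finite_E finite_V _ W])
        fix x assume "x \<in> insert None S - {None}"
        then obtain i j where "x = Some (i, j)" "i < t" "j < r - 1" using S unfolding wd_verts_def by auto
        then show "{None, x} \<in> ?E" unfolding wd_edges_def by auto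
      next
        fix W' F assume h: "S \<subseteq> W'" "W' \<subseteq> ?V" "F \<subseteq> ?E" "\<forall>e\<in>F. e \<subseteq> W'" "connected_sub W' F"
        have "None \<in> W'"
        proof (rule ccontr)
          assume nW: "None \<notin> W'"
          have "S \<noteq> {}" using S by auto
          then obtain x where x: "x \<in> S" by blast
          then obtain i j where xij: "x = Some (i, j)" "i < t" using S False unfolding wd_verts_def by auto
          have "S \<subseteq> blade r i"
          proof
            fix y assume y: "y \<in> S"
            have "(x, y) \<in> (edge_rel F)\<^sup>*" using h(5) h(1) x y unfolding connected_sub_def by blast
            then obtain j' where "y = Some (i, j')" using reach_blade[OF _ h(3) h(4) nW xij(1)] by blast
            moreover have "y \<in> ?V" using y S by blast
            ultimately show "y \<in> blade r i" unfolding wd_verts_def blade_def by auto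
          qed
          then show False using nb xij by blast
        qed
        then show "card (insert None S) \<le> card W'"
          using h finite_V by (meson card_mono finite_subset insert_subset)
      qed auto
      then show ?thesis using nb False S finS by simp
    qed
  qed
qed


theorem mainTheorem7:
  fixes r t n k :: nat
  assumes "r \<ge> 2" and "t \<ge> 2"
    and "n = t * (r - 1) + 1"
    and "2 \<le> k" and "k \<le> n"
  shows "int (steiner_wiener (wd_verts r t) (wd_edges r t) k)
           = int (n - 1) * int ((n - 1) choose (k - 1)) - int t * int ((r - 1) choose k)"
proof -
  let ?V = "wd_verts r t"
  define A where "A = {S. S \<subseteq> ?V \<and> card S = k}"
  define C where "C = {S. S \<subseteq> ?V - {None} \<and> card S = k}"
  define U where "U = (\<Union>i\<in>{..<t}. {S. S \<subseteq> blade r i \<and> card S = k})"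
  have bl: "blade r i \<subseteq> ?V - {None}" if "i < t" for i
    using that unfolding blade_def wd_verts_def by auto
  have UC: "U \<subseteq> C" unfolding U_def C_def using bl by blast
  have CA: "C \<subseteq> A" unfolding A_def C_def by blast
  have finA: "finite A" unfolding A_def using finite_V by simp
  have finC: "finite C" using finA CA finite_subset by blast
  have cardA: "card A = n choose k" unfolding A_def using n_subsets[OF finite_V] card_V assms(3) by simp
  have cardC: "card C = (n - 1) choose k" unfolding C_def using n_subsets[of "?V - {None}"] finite_V card_rest assms(3) by simp
  have cardU: "card U = t * ((r - 1) choose k)"
  proof -
    have "card U = (\<Sum>i<t. card {S. S \<subseteq> blade r i \<and> card S = k})"
      unfolding U_def
    proof (rule card_UN_disjoint)
      show "finite {..<t}" by simp
      show "\<forall>i\<in>{..<t}. finite {S. S \<subseteq> blade r i \<and> card S = k}"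
        unfolding blade_def by simp
      show "\<forall>i\<in>{..<t}. \<forall>j\<in>{..<t}. i \<noteq> j \<longrightarrow>
          {S. S \<subseteq> blade r i \<and> card S = k} \<inter> {S. S \<subseteq> blade r j \<and> card S = k} = {}"
      proof (intro ballI impI)
        fix i j :: nat assume "i \<noteq> j"
        then have "blade r i \<inter> blade r j = {}" unfolding blade_def by auto
        moreover have "S \<noteq> {}" if "card S = k" for S :: "(nat \<times> nat) option set" using that assms(4) by auto
        ultimately show "{S. S \<subseteq> blade r i \<and> card S = k} \<inter> {S. S \<subseteq> blade r j \<and> card S = k} = {}"
          by blast
      qed
    qed
    also have "\<dots> = (\<Sum>i<t. (r - 1) choose k)"
    proof (rule sum.cong)
      fix i assume "i \<in> {..<t}"
      have fb: "finite (blade r i)" unfolding blade_def by simp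
      show "card {S. S \<subseteq> blade r i \<and> card S = k} = (r - 1) choose k"
        using n_subsets[OF fb] card_blade by simp
    qed simp
    finally show ?thesis by simp
  qed
  have dv: "steiner_dist ?V (wd_edges r t) S = (k - 1) + (if S \<in> C - U then 1 else 0)" if "S \<in> A" for S
  proof -
    have "(None \<notin> S \<and> (\<forall>i<t. \<not> S \<subseteq> blade r i)) = (S \<in> C - U)"
      using that unfolding A_def C_def U_def by auto
    moreover have s1: "S \<subseteq> ?V" "card S = k" using that unfolding A_def by auto
    ultimately show ?thesis using d_val[OF assms(1) s1 assms(4)] by simp
  qed
  have "steiner_wiener ?V (wd_edges r t) k = (\<Sum>S\<in>A. (k - 1) + (if S \<in> C - U then 1 else 0))"
    unfolding steiner_wiener_def A_def[symmetric] by (rule sum.cong) (auto simp: dv)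
  also have "\<dots> = (k - 1) * card A + card (C - U)"
  proof -
    have "(\<Sum>S\<in>A. (if S \<in> C - U then 1 else 0 :: nat)) = card (A \<inter> (C - U))"
      using finA by (simp add: sum.If_cases set_diff_eq)
    moreover have "A \<inter> (C - U) = C - U" using CA by blast
    ultimately show ?thesis by (simp add: sum.distrib)
  qed
  also have "\<dots> = (k - 1) * (n choose k) + ((n - 1) choose k) - t * ((r - 1) choose k)"
  proof -
    have "card (C - U) = card C - card U" using UC finC by (meson card_Diff_subset finite_subset)
    moreover have "card U \<le> card C" using UC finC by (rule card_mono[rotated])
    ultimately show ?thesis using cardA cardC cardU by simp
  qed
  finally have SW: "steiner_wiener ?V (wd_edges r t) k = (k - 1) * (n choose k) + ((n - 1) choose k) - t * ((r - 1) choose k)" .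
  have le: "t * ((r - 1) choose k) \<le> (n - 1) choose k"
    using card_mono[OF finC UC] cardU cardC by simp
  have bi: "(k - 1) * (Suc (n - 1) choose k) + ((n - 1) choose k) = (n - 1) * ((n - 1) choose (k - 1))"
    by (rule binom_id) (use assms in auto)
  have "Suc (n - 1) = n" using assms(3) by simp
  then have bi2: "(k - 1) * (n choose k) + ((n - 1) choose k) = (n - 1) * ((n - 1) choose (k - 1))"
    using bi by simp
  show ?thesis unfolding SW using le bi2
    by (simp add: of_nat_diff le_add2 le_trans flip: of_nat_mult)
qed

end
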